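(* Let $D=(E,\mathcal{F})$ be a normal delta-matroid and $A\subseteq E$, with $A^{c}=E\setminus A$. Then $w(D*A)=w(D|_{A})+w(D|_{A^{c}})$.
   Context: A delta-matroid is a set system $(E,\mathcal{F})$, $\mathcal{F}\ne\emptyset$ a family of subsets of finite $E$, satisfying: for all $X,Y\in\mathcal{F}$ and $u\in X\Delta Y$ there is $v\in X\Delta Y$ with $X\Delta\{u,v\}\in\mathcal{F}$. It is normal if $\emptyset\in\mathcal{F}$. Twist: $D*A=(E,\{A\Delta X:X\in\mathcal{F}\})$. Width $w(D)$ = maximum minus minimum cardinality of feasible sets (so a delta-matroid on the empty ground set has width $0$). An element is a coloop if it lies in every feasible set. Deletion: $D\setminus e=(E\setminus e,\mathcal{F}')$ where $\mathcal{F}'=\{F\in\mathcal{F}: e\notin F\}$ if $e$ is not a coloop and $\mathcal{F}'=\{F\setminus e: F\in\mathcal{F}\}$ if $e$ is a coloop; deleting a set of elements one at a time is order-independent. The restriction $D|_{A}$ is the result of deleting all elements of $E\setminus A$. *)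

theory Defs
  imports Main
begin

type_synonym 'a set_system = "'a set \<times> 'a set set"

definition symdiff :: "'a set \<Rightarrow> 'a set \<Rightarrow> 'a set" where
  "symdiff X Y = (X - Y) \<union> (Y - X)"

definition delta_matroid :: "'a set_system \<Rightarrow> bool" where
  "delta_matroid D \<longleftrightarrow>
     (let E = fst D; F = snd D in
       finite E \<and> F \<noteq> {} \<and> (\<forall>X\<in>F. X \<subseteq> E) \<and>
       (\<forall>X\<in>F. \<forall>Y\<in>F. \<forall>u\<in>symdiff X Y. \<exists>v\<in>symdiff X Y. symdiff X {u, v} \<in> F))"

definition normal :: "'a set_system \<Rightarrow> bool" where
  "normal D \<longleftrightarrow> {} \<in> snd D"

definition twist :: "'a set_system \<Rightarrow> 'a set \<Rightarrow> 'a set_system" where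
  "twist D A = (fst D, (\<lambda>X. symdiff A X) ` snd D)"

definition width :: "'a set_system \<Rightarrow> nat" where
  "width D = Max (card ` snd D) - Min (card ` snd D)"

definition coloop :: "'a set_system \<Rightarrow> 'a \<Rightarrow> bool" where
  "coloop D e \<longleftrightarrow> (\<forall>X\<in>snd D. e \<in> X)"

definition delete :: "'a set_system \<Rightarrow> 'a \<Rightarrow> 'a set_system" where
  "delete D e = (fst D - {e},
     if coloop D e then (\<lambda>X. X - {e}) ` snd D else {X \<in> snd D. e \<notin> X})"

definition delete_list :: "'a set_system \<Rightarrow> 'a list \<Rightarrow> 'a set_system" where
  "delete_list D xs = foldl delete D xs"

text \<open>Restriction to A: delete the elements of E \ A one at a time (in some enumeration;
  the result is order independent).\<close>
definition restrict :: "'a set_system \<Rightarrow> 'a set \<Rightarrow> 'a set_system" where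
  "restrict D A = delete_list D (SOME xs. distinct xs \<and> set xs = fst D - A)"

end

theory Submission
  imports Defs
begin

lemma dm_props:
  assumes "delta_matroid (E, F)"
  shows "finite E" "\<And>X. X \<in> F \<Longrightarrow> X \<subseteq> E"
    "\<And>X Y u. X \<in> F \<Longrightarrow> Y \<in> F \<Longrightarrow> u \<in> symdiff X Y \<Longrightarrow> \<exists>v\<in>symdiff X Y. symdiff X {u, v} \<in> F"
  using assms unfolding delta_matroid_def Let_def by auto

lemma key:
  assumes dm: "delta_matroid (E,F)" and n: "{} \<in> F"
  shows "X \<in> F \<Longrightarrow> \<exists>Y\<in>F. Y \<subseteq> X \<inter> B \<and> card (X \<inter> B) \<le> card Y + card (X - B)"
proof (induction "card (X - B)" arbitrary: X rule: less_induct)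
  case less
  have fin: "finite X" using dm_props[OF dm] less.prems by (meson finite_subset)
  show ?case
  proof (cases "X - B = {}")
    case True
    then have "X \<subseteq> B" by auto
    then have "X \<inter> B = X" by auto
    then show ?thesis using less.prems \<open>X \<subseteq> B\<close> by (intro bexI[of _ X]) auto
  next
    case False
    then obtain u where u: "u \<in> X" "u \<notin> B" by auto
    have "u \<in> symdiff X {}" using u by (simp add: symdiff_def)
    then obtain v where v: "v \<in> symdiff X {}" and X'F: "symdiff X {u, v} \<in> F"
      using dm_props(3)[OF dm less.prems n] by blast
    have vX: "v \<in> X" using v by (simp add: symdiff_def)
    define X' where "X' = X - {u, v}"
    have X'eq: "symdiff X {u, v} = X'" using u vX by (auto simp: symdiff_def X'_def)
    have X'F2: "X' \<in> F" using X'F X'eq by simp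
    have lt: "card (X' - B) < card (X - B)"
      apply (rule psubset_card_mono) using fin u by (auto simp: X'_def)
    obtain Y where Y: "Y \<in> F" "Y \<subseteq> X' \<inter> B" "card (X' \<inter> B) \<le> card Y + card (X' - B)"
      using less.hyps[OF lt X'F2] by blast
    have c1: "card (X \<inter> B) \<le> card (X' \<inter> B) + 1"
    proof -
      have "X \<inter> B \<subseteq> insert v (X' \<inter> B)" using u by (auto simp: X'_def)
      then have "card (X \<inter> B) \<le> card (insert v (X' \<inter> B))"
        by (rule card_mono[rotated]) (use fin in \<open>auto simp: X'_def\<close>)
      also have "\<dots> \<le> card (X' \<inter> B) + 1"
      proof -
        have "finite (X' \<inter> B)" using fin unfolding X'_def by simp
        then show ?thesis by (simp add: card_insert_if)
      qed
      finally show ?thesis .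
    qed
    have c2: "card (X' - B) + 1 \<le> card (X - B)"
    proof -
      have "X' - B \<subseteq> (X - B) - {u}" by (auto simp: X'_def)
      then have "card (X' - B) \<le> card ((X - B) - {u})"
        by (rule card_mono[rotated]) (use fin in \<open>auto simp: X'_def\<close>)
      also have "\<dots> = card (X - B) - 1" using u by simp
      finally show ?thesis using lt by linarith
    qed
    have "Y \<subseteq> X \<inter> B" using Y(2) by (auto simp: X'_def)
    then show ?thesis using Y(1,3) c1 c2 by (intro bexI[of _ Y]) auto
  qed
qed

lemma delete_normal:
  assumes "{} \<in> snd D"
  shows "delete D e = (fst D - {e}, {X \<in> snd D. e \<notin> X})"
proof -
  have "\<not> coloop D e" using assms by (auto simp: coloop_def)
  then show ?thesis by (simp add: delete_def)
qed

lemma foldl_delete: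
  "{} \<in> snd D \<Longrightarrow> foldl delete D xs = (fst D - set xs, {X \<in> snd D. X \<inter> set xs = {}})"
proof (induction xs arbitrary: D)
  case Nil
  then show ?case by simp
next
  case (Cons x xs)
  have d: "delete D x = (fst D - {x}, {X \<in> snd D. x \<notin> X})"
    using delete_normal[OF Cons.prems] .
  have "{} \<in> snd (delete D x)" using d Cons.prems by simp
  then have "foldl delete (delete D x) xs = (fst (delete D x) - set xs, {X \<in> snd (delete D x). X \<inter> set xs = {}})"
    by (rule Cons.IH)
  then show ?case using d by auto
qed

lemma restrict_eq:
  assumes dm: "delta_matroid (E, F)" and n: "{} \<in> F" and AE: "A \<subseteq> E"
  shows "restrict (E, F) A = (A, {X \<in> F. X \<subseteq> A})"
proof -
  have "finite (E - A)" using dm_props(1)[OF dm] by simp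
  then have "\<exists>xs. distinct xs \<and> set xs = E - A" using finite_distinct_list by blast
  then have s: "distinct (SOME xs. distinct xs \<and> set xs = E - A) \<and> set (SOME xs. distinct xs \<and> set xs = E - A) = E - A"
    by (rule someI_ex)
  have "restrict (E, F) A = (E - (E - A), {X \<in> F. X \<inter> (E - A) = {}})"
    unfolding restrict_def delete_list_def using foldl_delete[of "(E,F)"] n s by simp
  also have "\<dots> = (A, {X \<in> F. X \<subseteq> A})" using AE dm_props(2)[OF dm] by auto
  finally show ?thesis .
qed

lemma width_restr:
  assumes dm: "delta_matroid (E, F)" and n: "{} \<in> F"
  shows "width (B, {X \<in> F. X \<subseteq> A}) = Max (card ` {X \<in> F. X \<subseteq> A})"
proof -
  have fin: "finite F" using dm_props[OF dm]
    by (meson Pow_iff finite_Pow_iff rev_finite_subset subsetI)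
  have "Min (card ` {X \<in> F. X \<subseteq> A}) = 0"
    by (rule Min_eqI) (use fin n in \<open>auto intro: image_eqI[of 0 card "{}"]\<close>)
  then show ?thesis by (simp add: width_def)
qed

lemma card_symdiff:
  assumes "finite A" "finite X"
  shows "card (symdiff A X) + card (A \<inter> X) = card A + card (X - A)"
proof -
  have "symdiff A X = (A - X) \<union> (X - A)" by (simp add: symdiff_def)
  then have "card (symdiff A X) = card (A - X) + card (X - A)"
    using assms by (metis card_Un_disjoint finite_Diff Diff_disjoint Int_Diff_disjoint inf_commute Diff_Int_distrib2 Int_Diff Un_Diff_Int Diff_Int2 disjoint_iff Diff_iff)
  moreover have "card (A - X) + card (A \<inter> X) = card A"
    using assms by (metis Diff_Diff_Int card_Diff_subset_Int finite_Diff inf_le1 card_mono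
        le_add_diff_inverse2 card_Diff_subset Int_commute)
  ultimately show ?thesis by simp
qed

theorem mainTheorem7:
  fixes E :: "'a set" and F :: "'a set set" and A :: "'a set"
  assumes "delta_matroid (E, F)" and "normal (E, F)" and "A \<subseteq> E"
  shows "width (twist (E, F) A) = width (restrict (E, F) A) + width (restrict (E, F) (E - A))"
proof -
  note dm = assms(1)
  have n: "{} \<in> F" using assms(2) by (simp add: normal_def)
  have finE: "finite E" using dm_props(1)[OF dm] .
  have sub: "\<And>X. X \<in> F \<Longrightarrow> X \<subseteq> E" using dm_props(2)[OF dm] .
  have finF: "finite F" using finE sub
    by (meson Pow_iff finite_Pow_iff rev_finite_subset subsetI)
  have finA: "finite A" using finE assms(3) finite_subset by blast
  have finX: "\<And>X. X \<in> F \<Longrightarrow> finite X" using finE sub finite_subset by blast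
  define M1 where "M1 = Max (card ` {X \<in> F. X \<subseteq> A})"
  define M2 where "M2 = Max (card ` {X \<in> F. X \<subseteq> E - A})"
  have r1: "width (restrict (E, F) A) = M1"
    using restrict_eq[OF dm n assms(3)] width_restr[OF dm n] M1_def by simp
  have r2: "width (restrict (E, F) (E - A)) = M2"
    using restrict_eq[OF dm n, of "E - A"] width_restr[OF dm n] M2_def by simp
  have fin1: "finite (card ` {X \<in> F. X \<subseteq> A})" using finF by simp
  have fin2: "finite (card ` {X \<in> F. X \<subseteq> E - A})" using finF by simp
  have ne1: "card ` {X \<in> F. X \<subseteq> A} \<noteq> {}" using n by auto
  have ne2: "card ` {X \<in> F. X \<subseteq> E - A} \<noteq> {}" using n by auto
  obtain Y1 where Y1: "Y1 \<in> F" "Y1 \<subseteq> A" "card Y1 = M1"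
    using Max_in[OF fin1 ne1] M1_def by auto
  obtain Y2 where Y2: "Y2 \<in> F" "Y2 \<subseteq> E - A" "card Y2 = M2"
    using Max_in[OF fin2 ne2] M2_def by auto
  have M1le: "M1 \<le> card A" using Y1 finA card_mono by metis
  have le1: "\<And>Y. Y \<in> F \<Longrightarrow> Y \<subseteq> A \<Longrightarrow> card Y \<le> M1"
    unfolding M1_def using fin1 by auto
  have le2: "\<And>Y. Y \<in> F \<Longrightarrow> Y \<subseteq> E - A \<Longrightarrow> card Y \<le> M2"
    unfolding M2_def using fin2 by auto
  let ?S = "card ` (\<lambda>X. symdiff A X) ` F"
  have finS: "finite ?S" using finF by simp
  have maxS: "Max ?S = card A + M2"
  proof (rule Max_eqI[OF finS])
    fix y assume "y \<in> ?S"
    then obtain X where X: "X \<in> F" "y = card (symdiff A X)" by auto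
    obtain Y where Y: "Y \<in> F" "Y \<subseteq> X \<inter> (E - A)" "card (X \<inter> (E - A)) \<le> card Y + card (X - (E - A))"
      using key[OF dm n X(1), of "E - A"] by blast
    have e1: "X \<inter> (E - A) = X - A" using sub[OF X(1)] by auto
    have e2: "X - (E - A) = A \<inter> X" using sub[OF X(1)] by auto
    have "card Y \<le> M2" using le2 Y by auto
    then show "y \<le> card A + M2" using card_symdiff[OF finA finX[OF X(1)]] Y(3) e1 e2 X(2) by simp
  next
    have "symdiff A Y2 = A \<union> Y2" using Y2 by (auto simp: symdiff_def)
    moreover have "card (A \<union> Y2) = card A + M2"
      using Y2 finA finX[OF Y2(1)] by (subst card_Un_disjoint) auto
    ultimately show "card A + M2 \<in> ?S" using Y2(1) by (metis image_eqI)
  qed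
  have minS: "Min ?S = card A - M1"
  proof (rule Min_eqI[OF finS])
    fix y assume "y \<in> ?S"
    then obtain X where X: "X \<in> F" "y = card (symdiff A X)" by auto
    obtain Y where Y: "Y \<in> F" "Y \<subseteq> X \<inter> A" "card (X \<inter> A) \<le> card Y + card (X - A)"
      using key[OF dm n X(1), of A] by blast
    have "card Y \<le> M1" using le1 Y by auto
    moreover have "A \<inter> X = X \<inter> A" by auto
    ultimately show "card A - M1 \<le> y" using card_symdiff[OF finA finX[OF X(1)]] Y(3) X(2) by simp
  next
    have "symdiff A Y1 = A - Y1" using Y1 by (auto simp: symdiff_def)
    moreover have "card (A - Y1) = card A - M1"
      using Y1 finA by (simp add: card_Diff_subset finite_subset)
    ultimately show "card A - M1 \<in> ?S" using Y1(1) by (metis image_eqI)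
  qed
  have "width (twist (E, F) A) = Max ?S - Min ?S" by (simp add: width_def twist_def image_image)
  then show ?thesis using maxS minS r1 r2 M1le by simp
qed

end
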